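(* Let $q$ be a prime power, $m$ a positive integer, $n=q^m-1$, and $\delta$ an integer with $2\le\delta\le q^{\lceil m/2\rceil}+1$ (and $\delta\le n$). Then the primitive, narrow-sense BCH code $\mathcal{BCH}(n,q;\delta)$ over $\mathbf{F}_q$ has dimension $$k=q^m-1-m\left\lceil(\delta-1)(1-1/q)\right\rceil.$$
   Context: Let $\alpha$ be a primitive element of $\mathbf{F}_{q^m}$ and $n=q^m-1$; $C_x=\{xq^k\bmod n\mid k\in\mathbf{Z}\}$ is the $q$-ary cyclotomic coset of $x$ modulo $n$. For $2\le\delta\le n$, $\mathcal{BCH}(n,q;\delta)$ is the cyclic code of length $n$ over $\mathbf{F}_q$ with generator polynomial $\prod_{z\in Z}(x-\alpha^z)$, where $Z=C_1\cup\cdots\cup C_{\delta-1}$. *)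

theory Defs
  imports "HOL-Computational_Algebra.Computational_Algebra"
begin

definition cyc_coset :: "nat \<Rightarrow> nat \<Rightarrow> nat \<Rightarrow> nat set" where
  "cyc_coset q n x = {(x * q ^ k) mod n | k. True}"

definition bch_Z :: "nat \<Rightarrow> nat \<Rightarrow> nat \<Rightarrow> nat set" where
  "bch_Z q n \<delta> = (\<Union>i\<in>{1..\<delta>-1}. cyc_coset q n i)"

definition primitive_elem :: "'b::field \<Rightarrow> bool" where
  "primitive_elem \<alpha> \<longleftrightarrow> (\<forall>y. y \<noteq> 0 \<longrightarrow> (\<exists>i::nat. y = \<alpha> ^ i))"

definition bch_gen :: "nat \<Rightarrow> nat \<Rightarrow> nat \<Rightarrow> 'b::field \<Rightarrow> 'b poly" where
  "bch_gen q n \<delta> \<alpha> = (\<Prod>z\<in>bch_Z q n \<delta>. [:- (\<alpha> ^ z), 1:])"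

text \<open>The cyclic code of length n over the base field 'a (embedded into 'b via \<iota>)
  with generator polynomial g: codewords are the polynomials c of degree < n over 'a
  that are divisible by g (after embedding into 'b[x]).\<close>
definition BCH :: "('a::field \<Rightarrow> 'b::field) \<Rightarrow> nat \<Rightarrow> nat \<Rightarrow> nat \<Rightarrow> 'b \<Rightarrow> 'a poly set" where
  "BCH \<iota> q n \<delta> \<alpha> = {c. degree c < n \<and> bch_gen q n \<delta> \<alpha> dvd map_poly \<iota> c}"

definition code_dim :: "'a::field poly set \<Rightarrow> nat" where
  "code_dim C = vector_space.dim (smult :: 'a \<Rightarrow> 'a poly \<Rightarrow> 'a poly) C"

end

theory Submission
  imports Defs
begin

lemma L_aux:
  fixes q m j x y r :: nat
  assumes q: "q \<ge> 2" and j: "1 \<le> j" "j < m" "r \<le> j" "1 \<le> r"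
    and x: "x < q^m - 1" "\<not> q dvd x" and y: "y \<le> q^r" "\<not> q dvd y"
  shows "(x * q^j) mod (q^m - 1) \<noteq> y"
proof
  assume H: "(x * q^j) mod (q^m - 1) = y"
  define n where "n = q^m - 1"
  define P where "P = q^j"
  define Q where "Q = q^(m-j)"
  have qm: "q^m \<ge> 1" using q by simp
  have "P * Q = q^m" unfolding P_def Q_def using j by (simp flip: power_add)
  hence PQ: "P * Q = n + 1" using qm unfolding n_def by simp
  have Qpos: "Q > 0" "P > 0" using q unfolding P_def Q_def by auto
  define x0 where "x0 = x mod Q"
  define x1 where "x1 = x div Q"
  have xeq: "x = x1 * Q + x0" unfolding x0_def x1_def by simp
  have x0pos: "x0 \<ge> 1"
  proof (rule ccontr)
    assume "\<not> x0 \<ge> 1"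
    hence "Q dvd x" unfolding x0_def by (auto simp: dvd_eq_mod_eq_0)
    moreover have "q dvd Q" unfolding Q_def using j by (simp add: dvd_power)
    ultimately show False using x by (meson dvd_trans)
  qed
  have x0lt: "x0 < Q" unfolding x0_def using Qpos by simp
  have "x < P * Q" using PQ x unfolding n_def by simp
  hence x1lt: "x1 < P" unfolding x1_def using Qpos
    by (simp add: div_less_iff_less_mult)
  define v where "v = x0 * P + x1"
  have "x * P = x1 * (P * Q) + x0 * P" unfolding xeq by (simp add: algebra_simps)
  hence xP: "x * P = x1 * n + v" unfolding v_def PQ by (simp add: algebra_simps)
  have "v + 1 \<le> (x0 + 1) * P" unfolding v_def using x1lt by simp
  also have "\<dots> \<le> Q * P" using x0lt by (intro mult_le_mono1) simp
  finally have vle: "v \<le> n" using PQ by (simp add: mult.commute)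
  have vne: "v \<noteq> n"
  proof
    assume "v = n"
    hence "n dvd x * P" using xP by simp
    moreover have "coprime n P"
    proof -
      have "coprime (q^m - 1) (q^m)" using qm q by (intro coprime_diff_one_left_nat) simp
      hence "coprime n q" using j unfolding n_def by simp
      thus ?thesis unfolding P_def by simp
    qed
    ultimately have "n dvd x" using coprime_dvd_mult_left_iff by blast
    moreover have "x > 0" using x by (intro gr0I) auto
    ultimately show False using x n_def by (simp add: nat_dvd_not_less)
  qed
  hence vlt: "v < n" using vle by simp
  have "(x * P) mod n = v mod n" unfolding xP by simp
  hence "y = v" using H vlt unfolding n_def[symmetric] P_def[symmetric] by simp
  hence "y \<ge> P" unfolding v_def using x0pos
    by (metis le_add1 le_trans mult_1 mult_le_mono1)
  moreover have "P \<ge> q^r" unfolding P_def using j q by (simp add: power_increasing)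
  ultimately have "y = q^r" using y by simp
  hence "q dvd y" using j by simp
  thus False using y by simp
qed


lemma qm_mod:
  fixes q m n a :: nat
  assumes "n = q^m - 1" "q \<ge> 1"
  shows "(a * q^(m*t + s)) mod n = (a * q^s) mod n"
proof (induction t)
  case 0 then show ?case by simp
next
  case (Suc t)
  have qm: "q^m mod n = 1 mod n" using assms
    by (metis Suc_eq_plus1 le_add_diff_inverse2 mod_add_self2 one_le_power add.commute)
  have "a * q^(m * Suc t + s) = (a * q^(m*t + s)) * q^m"
    by (simp add: power_add algebra_simps)
  hence "(a * q^(m * Suc t + s)) mod n = ((a * q^(m*t + s)) * (q^m mod n)) mod n"
    by (simp only: mod_mult_right_eq)
  also have "\<dots> = (a * q^(m*t + s)) mod n" using qm
    by (metis mod_mult_right_eq mult.right_neutral)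
  finally show ?case using Suc by simp
qed

definition good :: "nat \<Rightarrow> nat \<Rightarrow> nat \<Rightarrow> nat \<Rightarrow> bool" where
  "good q m n x \<longleftrightarrow> 0 < x \<and> x < n \<and> x \<le> q ^ ((m + 1) div 2) \<and> \<not> q dvd x"

lemma KL0:
  fixes q m n x y i k :: nat
  assumes q: "q \<ge> 2" and m: "m \<ge> 1" and n: "n = q^m - 1"
    and gx: "good q m n x" and gy: "good q m n y"
    and ik: "i \<le> k" "k < m"
    and H: "(x * q^i) mod n = (y * q^k) mod n"
  shows "x = y \<and> i = k"
proof -
  define r where "r = (m + 1) div 2"
  define d where "d = k - i"
  have r1: "r \<ge> 1" using m unfolding r_def by simp
  have xg: "0 < x" "x < n" "x \<le> q^r" "\<not> q dvd x" using gx unfolding good_def r_def by auto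
  have yg: "0 < y" "y < n" "y \<le> q^r" "\<not> q dvd y" using gy unfolding good_def r_def by auto
  have q1: "q \<ge> 1" using q by simp
  have "(x * q^i * q^(m-i)) mod n = (y * q^k * q^(m-i)) mod n"
    using H by (metis mod_mult_left_eq)
  moreover have "x * q^i * q^(m-i) = x * q^(m*1 + 0)" using ik
    by (simp add: mult.assoc flip: power_add)
  moreover have "y * q^k * q^(m-i) = y * q^(m*1 + d)"
  proof -
    have e: "k + (m - i) = m*1 + d" using ik unfolding d_def by simp
    have "y * q^k * q^(m-i) = y * q^(k + (m - i))" by (simp add: power_add mult.assoc)
    thus ?thesis using e by simp
  qed
  ultimately have "(x * q^(m*1 + 0)) mod n = (y * q^(m*1 + d)) mod n" by simp
  hence xd: "x = (y * q^d) mod n" unfolding qm_mod[OF n q1] using xg by simp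
  show ?thesis
  proof (cases "d = 0")
    case True
    then show ?thesis using xd yg ik unfolding d_def by simp
  next
    case False
    show ?thesis
    proof (cases "r \<le> d")
      case True
      have "(y * q^d) mod (q^m - 1) \<noteq> x"
        by (rule L_aux[OF q _ _ True r1]) (use False ik xg yg n d_def in auto)
      then show ?thesis using xd n by simp
    next
      case False2: False
      have "(x * q^(m-d)) mod n = ((y * q^d) mod n * q^(m-d)) mod n" using xd by simp
      also have "\<dots> = (y * q^(m*1 + 0)) mod n"
        using ik \<open>d \<noteq> 0\<close> unfolding d_def
        by (simp add: mod_mult_left_eq mult.assoc flip: power_add)
      also have "\<dots> = y" unfolding qm_mod[OF n q1] using yg by simp
      finally have eq: "(x * q^(m-d)) mod n = y" .
      have "r \<le> m - d" using False2 unfolding r_def by linarith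
      have "(x * q^(m-d)) mod (q^m - 1) \<noteq> y"
        by (rule L_aux[OF q _ _ \<open>r \<le> m - d\<close> r1]) (use False ik xg yg n d_def in auto)
      then show ?thesis using eq n by simp
    qed
  qed
qed

lemma KL:
  fixes q m n x y i k :: nat
  assumes q: "q \<ge> 2" and m: "m \<ge> 1" and n: "n = q^m - 1"
    and gx: "good q m n x" and gy: "good q m n y"
    and ik: "i < m" "k < m"
    and H: "(x * q^i) mod n = (y * q^k) mod n"
  shows "x = y \<and> i = k"
proof (cases "i \<le> k")
  case True
  then show ?thesis using KL0[OF q m n gx gy True ik(2) H] by simp
next
  case False
  then show ?thesis using KL0[OF q m n gy gx _ ik(1) H[symmetric]] by simp
qed

lemma coset_image:
  fixes q m n x :: nat
  assumes q: "q \<ge> 1" and m: "m \<ge> 1" and n: "n = q^m - 1"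
  shows "cyc_coset q n x = (\<lambda>j. (x * q^j) mod n) ` {..<m}"
proof -
  have "(x * q^k) mod n = (x * q^(k mod m)) mod n" for k
  proof -
    have "k = m * (k div m) + k mod m" by simp
    hence "(x * q^k) mod n = (x * q^(m * (k div m) + k mod m)) mod n" by metis
    also have "\<dots> = (x * q^(k mod m)) mod n" by (rule qm_mod[OF n q])
    finally show ?thesis .
  qed
  moreover have "k mod m < m" for k using m by simp
  ultimately show ?thesis unfolding cyc_coset_def
  proof (intro set_eqI iffI)
    fix z assume A: "\<And>k. (x * q^k) mod n = (x * q^(k mod m)) mod n" and B: "\<And>k. k mod m < m"
      and "z \<in> {(x * q ^ k) mod n | k. True}"
    then obtain k where "z = (x * q^k) mod n" by auto
    thus "z \<in> (\<lambda>j. (x * q^j) mod n) ` {..<m}" using A B by (intro image_eqI[of _ _ "k mod m"]) auto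
  qed auto
qed

lemma card_coset:
  fixes q m n x :: nat
  assumes q: "q \<ge> 2" and m: "m \<ge> 1" and n: "n = q^m - 1" and gx: "good q m n x"
  shows "card (cyc_coset q n x) = m"
proof -
  have "inj_on (\<lambda>j. (x * q^j) mod n) {..<m}"
    by (intro inj_onI) (use KL[OF q m n gx gx] in auto)
  moreover have q1: "q \<ge> 1" using q by simp
  ultimately show ?thesis unfolding coset_image[OF q1 m n] by (simp add: card_image)
qed

lemma coset_disj:
  fixes q m n x y :: nat
  assumes q: "q \<ge> 2" and m: "m \<ge> 1" and n: "n = q^m - 1"
    and gx: "good q m n x" and gy: "good q m n y" and ne: "x \<noteq> y"
  shows "cyc_coset q n x \<inter> cyc_coset q n y = {}"
proof -
  have q1: "q \<ge> 1" using q by simp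
  show ?thesis unfolding coset_image[OF q1 m n] using KL[OF q m n gx gy] ne by auto
qed

lemma decomp:
  fixes q i :: nat
  assumes "q \<ge> 2" "0 < i"
  shows "\<exists>x k. i = x * q^k \<and> \<not> q dvd x"
  using assms(2)
proof (induction i rule: less_induct)
  case (less i)
  show ?case
  proof (cases "q dvd i")
    case True
    then obtain i' where i': "i = q * i'" by auto
    have "0 < i'" "i' < i" using less.prems assms(1) i' by auto
    then obtain x k where "i' = x * q^k" "\<not> q dvd x" using less.IH by blast
    then show ?thesis using i' by (intro exI[of _ x] exI[of _ "Suc k"]) auto
  next
    case False
    then show ?thesis by (intro exI[of _ i] exI[of _ 0]) auto
  qed
qed


lemma card_nonmult:
  fixes q N :: nat
  assumes q: "q \<ge> 2"
  shows "card {x\<in>{1..N}. \<not> q dvd x} = N - N div q"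
proof -
  define M where "M = {x\<in>{1..N}. q dvd x}"
  have Meq: "M = (\<lambda>k. q * k) ` {1..N div q}"
  proof (intro set_eqI iffI)
    fix x assume "x \<in> M"
    then obtain k where k: "x = q * k" "1 \<le> x" "x \<le> N" unfolding M_def by auto
    hence "1 \<le> k" by (cases k) auto
    moreover have "k \<le> N div q" using k q by (simp add: less_eq_div_iff_mult_less_eq mult.commute)
    ultimately show "x \<in> (\<lambda>k. q * k) ` {1..N div q}" using k by auto
  next
    fix x assume "x \<in> (\<lambda>k. q * k) ` {1..N div q}"
    then obtain k where k0: "k \<in> {1..N div q}" "x = q * k" by (rule imageE)
    hence k: "x = q * k" "1 \<le> k" "k \<le> N div q" by auto
    have "k * q \<le> N" using k q by (simp add: less_eq_div_iff_mult_less_eq)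
    moreover have "1 \<le> q * k" using k q by simp
    ultimately show "x \<in> M" unfolding M_def using k by (auto simp: mult.commute)
  qed
  have "card M = N div q" unfolding Meq using q by (subst card_image) (auto intro: inj_onI)
  moreover have "{x\<in>{1..N}. \<not> q dvd x} = {1..N} - M" unfolding M_def by auto
  moreover have "M \<subseteq> {1..N}" unfolding M_def by auto
  ultimately show ?thesis by (simp add: card_Diff_subset finite_subset)
qed

lemma card_Z:
  fixes q m n \<delta> :: nat
  assumes q: "q \<ge> 2" and m: "m \<ge> 1" and n: "n = q^m - 1"
    and d1: "2 \<le> \<delta>" and d2: "\<delta> \<le> q ^ ((m + 1) div 2) + 1" and d3: "\<delta> \<le> n"
  shows "card (bch_Z q n \<delta>) = m * ((\<delta> - 1) - (\<delta> - 1) div q)"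
proof -
  define S where "S = {x\<in>{1..\<delta>-1}. \<not> q dvd x}"
  have goodS: "good q m n x" if "x \<in> S" for x
    using that d2 d3 unfolding S_def good_def by auto
  have q1: "q \<ge> 1" using q by simp
  have Zeq: "bch_Z q n \<delta> = (\<Union>x\<in>S. cyc_coset q n x)"
  proof (intro set_eqI iffI)
    fix z assume "z \<in> bch_Z q n \<delta>"
    then obtain i j where i: "i \<in> {1..\<delta>-1}" and z: "z = (i * q^j) mod n"
      unfolding bch_Z_def cyc_coset_def by auto
    obtain x k where xk: "i = x * q^k" "\<not> q dvd x" using decomp[OF q, of i] i by auto
    have "x \<noteq> 0" using xk i by auto
    have "1 \<le> q^k" using q by simp
    hence "x \<le> x * q^k" by simp
    hence "x \<le> i" using xk(1) by simp
    hence "x \<le> \<delta> - 1" using i by (meson atLeastAtMost_iff le_trans)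
    hence "x \<in> S" using xk \<open>x \<noteq> 0\<close> unfolding S_def by auto
    moreover have "z = (x * q^(k + j)) mod n" using z xk by (simp add: power_add mult.assoc)
    ultimately show "z \<in> (\<Union>x\<in>S. cyc_coset q n x)" unfolding cyc_coset_def by blast
  next
    fix z assume "z \<in> (\<Union>x\<in>S. cyc_coset q n x)"
    thus "z \<in> bch_Z q n \<delta>" unfolding bch_Z_def S_def by auto
  qed
  have "card (\<Union>x\<in>S. cyc_coset q n x) = (\<Sum>x\<in>S. card (cyc_coset q n x))"
  proof (rule card_UN_disjoint)
    show "finite S" unfolding S_def by simp
    show "\<forall>i\<in>S. finite (cyc_coset q n i)" unfolding coset_image[OF q1 m n] by simp
    show "\<forall>i\<in>S. \<forall>j\<in>S. i \<noteq> j \<longrightarrow> cyc_coset q n i \<inter> cyc_coset q n j = {}"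
      using coset_disj[OF q m n] goodS by blast
  qed
  also have "\<dots> = (\<Sum>x\<in>S. m)" using card_coset[OF q m n] goodS by simp
  also have "\<dots> = m * card S" by simp
  also have "card S = (\<delta> - 1) - (\<delta> - 1) div q" unfolding S_def by (rule card_nonmult[OF q])
  finally show ?thesis using Zeq by simp
qed

lemma ceil_part:
  fixes q N :: nat
  assumes "q \<ge> 2"
  shows "\<lceil>real N * (1 - 1 / real q)\<rceil> = int (N - N div q)"
proof -
  have "real N * (1 - 1 / real q) = - (real N / real q) + of_int (int N)" by (simp add: algebra_simps)
  hence "\<lceil>real N * (1 - 1 / real q)\<rceil> = \<lceil>- (real N / real q) + of_int (int N)\<rceil>" by simp
  also have "\<dots> = - \<lfloor>real N / real q\<rfloor> + int N"
    by (simp only: ceiling_add_of_int ceiling_minus)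
  also have "\<lfloor>real N / real q\<rfloor> = int (N div q)" by (rule floor_divide_of_nat_eq)
  finally show ?thesis using div_le_dividend[of N q] by (simp add: of_nat_diff)
qed

lemma map_poly_add_hom:
  assumes "f 0 = 0" "\<And>x y. f (x + y) = f x + f y"
  shows "map_poly f (p + q) = map_poly f p + map_poly f q"
  by (intro poly_eqI) (simp add: coeff_map_poly assms)

lemma map_poly_mult_hom:
  fixes f :: "'a::comm_ring_1 \<Rightarrow> 'b::comm_ring_1"
  assumes f0: "f 0 = 0" and fa: "\<And>x y. f (x + y) = f x + f y" and fm: "\<And>x y. f (x * y) = f x * f y"
  shows "map_poly f (p * q) = map_poly f p * map_poly f q"
proof (induction p rule: pCons_induct)
  case 0 then show ?case by simp
next
  case (pCons a p)
  have "map_poly f (pCons a p * q) = map_poly f (smult a q) + map_poly f (pCons 0 (p * q))"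
    by (simp add: map_poly_add_hom[OF f0 fa])
  also have "\<dots> = smult (f a) (map_poly f q) + pCons 0 (map_poly f p * map_poly f q)"
    by (simp add: map_poly_smult[OF f0 fm] map_poly_pCons[where f=f, OF f0] f0 pCons.IH)
  also have "\<dots> = map_poly f (pCons a p) * map_poly f q"
    by (simp add: map_poly_pCons[where f=f, OF f0])
  finally show ?case .
qed

lemma map_poly_prod_hom:
  fixes f :: "'a::comm_ring_1 \<Rightarrow> 'b::comm_ring_1"
  assumes f0: "f 0 = 0" and fa: "\<And>x y. f (x + y) = f x + f y" and fm: "\<And>x y. f (x * y) = f x * f y"
    and f1: "f 1 = 1"
  shows "map_poly f (\<Prod>i\<in>A. g i) = (\<Prod>i\<in>A. map_poly f (g i))"
  by (induction A rule: infinite_finite_induct) (simp_all add: f1 map_poly_mult_hom[OF f0 fa fm])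

lemma ff_power_card:
  fixes x :: "'a :: {finite,field}"
  shows "x ^ card (UNIV :: 'a set) = x"
proof (cases "x = 0")
  case False
  have "x * (\<Prod>y\<in>UNIV-{0}. x * y) = x * x ^ (card (UNIV :: 'a set) - 1) * \<Prod>(UNIV-{0})"
    by (simp add: prod.distrib mult_ac)
  also have "x * x ^ (card (UNIV :: 'a set) - 1) = x ^ Suc (card (UNIV :: 'a set) - 1)"
    by (subst power_Suc) auto
  also have "Suc (card (UNIV :: 'a set) - 1) = card (UNIV :: 'a set)"
    using finite_UNIV_card_ge_0[where ?'a = 'a] by simp
  also have "(\<Prod>y\<in>UNIV-{0}. x * y) = (\<Prod>y\<in>UNIV-{0}. y)"
    by (rule prod.reindex_bij_witness[of _ "\<lambda>y. y / x" "\<lambda>y. x * y"]) (use False in auto)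
  finally show ?thesis
    by simp
qed (use finite_UNIV_card_ge_0[where ?'a = 'a] in auto)

lemma vs_poly: "vector_space (smult :: 'a::field \<Rightarrow> 'a poly \<Rightarrow> 'a poly)"
  by unfold_locales (simp_all add: smult_add_right smult_add_left)

lemma sum_monoms_eq:
  fixes s :: "'a::comm_ring_1 poly"
  assumes "degree s < K"
  shows "(\<Sum>i<K. monom (coeff s i) i) = s"
proof (intro poly_eqI)
  fix j
  have "coeff (\<Sum>i<K. monom (coeff s i) i) j = (\<Sum>i<K. if j = i then coeff s i else 0)"
    by (simp add: coeff_sum coeff_monom)
  also have "\<dots> = (if j < K then coeff s j else 0)" by (simp add: sum.delta)
  also have "\<dots> = coeff s j" using assms by (auto simp: coeff_eq_0)
  finally show "coeff (\<Sum>i<K. monom (coeff s i) i) j = coeff s j" .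
qed

lemma dim_multiples:
  fixes g :: "'a::field poly" and N :: nat
  assumes g0: "g \<noteq> 0" and dg: "degree g \<le> N"
  shows "vector_space.dim (smult :: 'a \<Rightarrow> 'a poly \<Rightarrow> 'a poly) {c. degree c < N \<and> g dvd c} = N - degree g"
proof -
  interpret V: vector_space "smult :: 'a \<Rightarrow> 'a poly \<Rightarrow> 'a poly" by (rule vs_poly)
  define K where "K = N - degree g"
  define b where "b i = g * monom 1 i" for i
  define B where "B = b ` {..<K}"
  define C where "C = {c. degree c < N \<and> g dvd c}"
  have degb: "degree (b i) = degree g + i" for i
    unfolding b_def using g0 by (simp add: degree_mult_eq degree_monom_eq)
  have injb: "inj_on b {..<K}"
  proof (intro inj_onI)
    fix i j assume "b i = b j"
    hence "degree (b i) = degree (b j)" by simp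
    thus "i = j" using degb by simp
  qed
  have BC: "B \<subseteq> C" unfolding B_def C_def using degb dg by (auto simp: K_def b_def)
  have cardB: "card B = K" unfolding B_def using injb by (simp add: card_image)
  have sm: "smult a (g * monom 1 i) = g * monom a i" for a i
    by (simp add: smult_monom flip: mult_smult_right)
  have finB: "finite B" unfolding B_def by simp
  have indep: "V.independent B"
    unfolding V.dependent_finite[of B, OF finB]
  proof (intro notI, elim exE conjE bexE)
    fix c v assume H: "(\<Sum>v\<in>B. smult (c v) v) = 0" and v: "v \<in> B" and cv: "c v \<noteq> 0"
    have "(\<Sum>v\<in>B. smult (c v) v) = (\<Sum>i<K. smult (c (b i)) (b i))"
      unfolding B_def by (rule sum.reindex[OF injb, unfolded comp_def])
    also have "\<dots> = g * (\<Sum>i<K. monom (c (b i)) i)"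
      by (simp add: b_def sum_distrib_left sm)
    finally have "g * (\<Sum>i<K. monom (c (b i)) i) = 0" using H by simp
    hence S0: "(\<Sum>i<K. monom (c (b i)) i) = 0" using g0 by simp
    obtain i where i: "i < K" "v = b i" using v unfolding B_def by auto
    have "coeff (\<Sum>i<K. monom (c (b i)) i) i = c (b i)"
      using i by (simp add: coeff_sum coeff_monom sum.delta)
    thus False using S0 i cv by simp
  qed
  have span: "C \<subseteq> V.span B"
  proof
    fix c assume "c \<in> C"
    hence c: "degree c < N" "g dvd c" unfolding C_def by auto
    then obtain s where s: "c = g * s" by auto
    show "c \<in> V.span B"
    proof (cases "s = 0")
      case True then show ?thesis using s V.span_zero by simp
    next
      case False
      hence "degree s < K" using c s g0 by (simp add: degree_mult_eq K_def)
      hence "c = g * (\<Sum>i<K. monom (coeff s i) i)" using s sum_monoms_eq by metis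
      also have "\<dots> = (\<Sum>i<K. smult (coeff s i) (b i))"
        by (simp add: b_def sum_distrib_left sm)
      finally have ceq: "c = (\<Sum>i<K. smult (coeff s i) (b i))" .
      show ?thesis unfolding ceq
        by (intro V.span_sum V.span_scale V.span_base) (auto simp: B_def)
    qed
  qed
  have "V.dim C = K" by (rule V.dim_unique[OF BC span indep cardB])
  thus ?thesis unfolding C_def K_def .
qed

lemma map_poly_dvd_iff:
  fixes f :: "'a::field \<Rightarrow> 'b::field"
  assumes inj: "inj f" and f0: "f 0 = 0" and fa: "\<And>x y. f (x + y) = f x + f y"
    and fm: "\<And>x y. f (x * y) = f x * f y" and a0: "a \<noteq> 0"
  shows "map_poly f a dvd map_poly f b \<longleftrightarrow> a dvd b"
proof
  assume "a dvd b"
  then obtain k where "b = a * k" by auto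
  thus "map_poly f a dvd map_poly f b" by (simp add: map_poly_mult_hom[OF f0 fa fm])
next
  assume H: "map_poly f a dvd map_poly f b"
  have nz: "f x \<noteq> 0" if "x \<noteq> 0" for x using inj f0 that by (metis injD)
  have deg: "degree (map_poly f p) = degree p" for p by (rule degree_map_poly[OF nz])
  have z: "map_poly f p = 0 \<longleftrightarrow> p = 0" for p by (rule map_poly_eq_0_iff[where f=f, OF f0 nz])
  have "b = a * (b div a) + b mod a" by simp
  hence "map_poly f b = map_poly f a * map_poly f (b div a) + map_poly f (b mod a)"
    by (metis map_poly_add_hom[OF f0 fa] map_poly_mult_hom[OF f0 fa fm])
  hence "map_poly f a dvd map_poly f (b mod a)" using H
    by (metis dvd_add_right_iff dvd_triv_left)
  show "a dvd b"
  proof (rule ccontr)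
    assume "\<not> a dvd b"
    hence r0: "b mod a \<noteq> 0" by (simp add: mod_eq_0_iff_dvd)
    hence "degree (b mod a) < degree a" using a0 by (intro degree_mod_less')
    moreover have "degree (map_poly f a) \<le> degree (map_poly f (b mod a))"
      by (rule dvd_imp_degree_le) (use \<open>map_poly f a dvd map_poly f (b mod a)\<close> r0 z in auto)
    ultimately show False using deg by simp
  qed
qed

lemma ff_of_nat_card: "of_nat (card (UNIV :: 'a::{finite,field} set)) = (0::'a)"
proof -
  have "(\<Sum>y\<in>(UNIV::'a set). 1 + y) = (\<Sum>y\<in>UNIV. y)"
    by (rule sum.reindex_bij_witness[of _ "\<lambda>y. y - 1" "\<lambda>y. 1 + y"]) auto
  hence "of_nat (card (UNIV :: 'a set)) + (\<Sum>y\<in>(UNIV::'a set). y) = (\<Sum>y\<in>UNIV. y)"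
    by (simp add: sum.distrib)
  thus ?thesis by simp
qed

theorem mainTheorem6:
  fixes \<iota> :: "'a::{finite,field} \<Rightarrow> 'b::{finite,field}"
    and \<alpha> :: 'b and q m n \<delta> :: nat
  assumes "\<exists>p e. prime p \<and> e > 0 \<and> q = p ^ e"
    and "card (UNIV :: 'a set) = q"
    and "m > 0"
    and "card (UNIV :: 'b set) = q ^ m"
    and "inj \<iota>"
    and "\<And>x y. \<iota> (x + y) = \<iota> x + \<iota> y"
    and "\<And>x y. \<iota> (x * y) = \<iota> x * \<iota> y"
    and "\<iota> 1 = 1"
    and "primitive_elem \<alpha>"
    and "n = q ^ m - 1"
    and "2 \<le> \<delta>"
    and "\<delta> \<le> q ^ ((m + 1) div 2) + 1"
    and "\<delta> \<le> n"
  shows "int (code_dim (BCH \<iota> q n \<delta> \<alpha>))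
           = int (q ^ m) - 1 - int m * \<lceil>real (\<delta> - 1) * (1 - 1 / real q)\<rceil>"
proof -
  note A = assms
  obtain p e where pe: "prime p" "e > 0" "q = p^e" using A(1) by blast
  have p2: "p \<ge> 2" using pe(1) by (simp add: prime_ge_2_nat)
  have "p \<le> p^e" using pe(2) p2 by (simp add: self_le_power)
  hence q2: "q \<ge> 2" using pe p2 by simp
  have q1: "q \<ge> 1" using q2 by simp
  have m1: "m \<ge> 1" using A(3) by simp
  have npos: "n > 0" using A(11,13) by simp
  define N where "N = \<delta> - 1"
  define Z where "Z = bch_Z q n \<delta>"
  have cardZ: "card Z = m * (N - N div q)" unfolding Z_def N_def
    by (rule card_Z[OF q2 m1 A(10,11,12,13)])
  have ceil: "\<lceil>real (\<delta> - 1) * (1 - 1 / real q)\<rceil> = int (N - N div q)"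
    unfolding N_def by (rule ceil_part[OF q2])
  have Zsub: "Z \<subseteq> {..<n}" unfolding Z_def bch_Z_def cyc_coset_def using npos by auto
  have finZ: "finite Z" using Zsub finite_subset by blast
  have cardZn: "card Z \<le> n" using card_mono[OF _ Zsub] by simp
  have i0: "\<iota> 0 = 0" using A(6)[of 0 0] by (metis add_cancel_right_right add.right_neutral)
  have ipow: "\<iota> (a ^ k) = \<iota> a ^ k" for a k
    by (induction k) (simp_all add: A(8) A(7))
  have inat: "\<iota> (of_nat k) = of_nat k" for k
    by (induction k) (simp_all add: i0 A(8) A(6))
  have inz: "\<iota> x \<noteq> 0" if "x \<noteq> 0" for x using A(5) i0 that by (metis injD)
  have iaq: "\<iota> a ^ q = \<iota> a" for a
    using ff_power_card[of a] A(2) by (metis ipow)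
  have charab: "CHAR('a) = CHAR('b)"
  proof (rule dvd_antisym)
    have "of_nat CHAR('b) = (0::'b)" by simp
    hence "\<iota> (of_nat CHAR('b)) = \<iota> 0" by (simp add: inat i0)
    hence "of_nat CHAR('b) = (0::'a)" using A(5) by (meson injD)
    thus "CHAR('a) dvd CHAR('b)" by (simp add: of_nat_eq_0_iff_char_dvd)
  next
    have "of_nat CHAR('a) = (0::'a)" by simp
    hence "of_nat CHAR('a) = (0::'b)" using inat[of "CHAR('a)"] i0 by simp
    thus "CHAR('b) dvd CHAR('a)" by (simp add: of_nat_eq_0_iff_char_dvd)
  qed
  have primeb: "prime CHAR('b)"
    by (rule prime_CHAR_semidom[OF finite_imp_CHAR_pos]) simp
  have "CHAR('a) dvd q" using ff_of_nat_card[where 'a='a] A(2) by (simp add: of_nat_eq_0_iff_char_dvd)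
  hence "CHAR('b) dvd p^e" using charab pe by simp
  hence "CHAR('b) dvd p" using primeb prime_dvd_power by blast
  hence charp: "CHAR('b) = p" using primeb pe(1) by (simp add: primes_dvd_imp_eq)
  have frob_add: "(x + y) ^ q = x ^ q + y ^ q" for x y :: 'b
    by (rule freshmans_dream'[OF primeb]) (simp add: charp pe)
  define \<phi> where "\<phi> y = y ^ q" for y :: 'b
  have \<phi>0: "\<phi> 0 = 0" unfolding \<phi>_def using q2 by simp
  have \<phi>1: "\<phi> 1 = 1" unfolding \<phi>_def by simp
  have \<phi>a: "\<phi> (x + y) = \<phi> x + \<phi> y" for x y unfolding \<phi>_def by (rule frob_add)
  have \<phi>m: "\<phi> (x * y) = \<phi> x * \<phi> y" for x y unfolding \<phi>_def by (simp add: power_mult_distrib)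
  have \<phi>neg: "\<phi> (- x) = - \<phi> x" for x
  proof -
    have "\<phi> (- x + x) = \<phi> (- x) + \<phi> x" by (rule \<phi>a)
    thus ?thesis using \<phi>0 by (simp add: eq_neg_iff_add_eq_0)
  qed
  define F where "F = {y::'b. y ^ q = y}"
  have rF: "range \<iota> \<subseteq> F" unfolding F_def using iaq by auto
  have cardr: "card (range \<iota>) = q" using A(2,5) by (simp add: card_image)
  have cardF: "card F \<le> q"
  proof -
    define P where "P = (monom 1 q - [:0, 1:] :: 'b poly)"
    have "coeff [:0, 1::'b:] q = 0" using q2 by (intro coeff_eq_0) simp
    hence cP: "coeff P q = 1" unfolding P_def using q2 by (simp add: coeff_monom)
    hence P0: "P \<noteq> 0" by auto
    have "F = {y. poly P y = 0}" unfolding F_def P_def by (auto simp: poly_monom)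
    hence "card F \<le> degree P" using card_poly_roots_bound[OF P0] by simp
    also have "degree P \<le> q" unfolding P_def using q2
      by (intro order.trans[OF degree_diff_le_max]) (auto simp: degree_monom_le degree_pCons_eq_if)
    finally show ?thesis .
  qed
  have Fr: "F = range \<iota>"
    using card_subset_eq[OF _ rF] cardr cardF card_mono[OF _ rF] by simp
  have "card (UNIV :: 'b set) \<ge> 3" using A(4,10,11,13) by simp
  then obtain y :: 'b where y: "y \<noteq> 0" "y \<noteq> 1"
  proof -
    assume H: "\<And>y::'b. y \<noteq> 0 \<Longrightarrow> y \<noteq> 1 \<Longrightarrow> thesis"
    { assume "\<forall>y::'b. y = 0 \<or> y = 1"
      hence "(UNIV :: 'b set) \<subseteq> {0, 1}" by auto
      hence "card (UNIV :: 'b set) \<le> card {0::'b, 1}" by (intro card_mono) auto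
      also have "card {0::'b, 1} = 2" by simp
      finally have "card (UNIV :: 'b set) \<le> 2" .
      hence False using \<open>card (UNIV :: 'b set) \<ge> 3\<close> by simp }
    thus thesis using H by blast
  qed
  have a0: "\<alpha> \<noteq> 0"
  proof
    assume "\<alpha> = 0"
    obtain i where "y = \<alpha> ^ i" using A(9) y unfolding primitive_elem_def by blast
    thus False using y \<open>\<alpha> = 0\<close> by (cases i) auto
  qed
  have an: "\<alpha> ^ n = 1"
  proof -
    have "q^m \<ge> 1" using q1 by simp
    hence "n + 1 = card (UNIV :: 'b set)" using A(4,10) by simp
    hence "\<alpha> ^ (n + 1) = \<alpha>" using ff_power_card[of \<alpha>] by simp
    thus ?thesis using a0 by simp
  qed
  have amod: "\<alpha> ^ k = \<alpha> ^ (k mod n)" for k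
  proof -
    have "\<alpha> ^ k = \<alpha> ^ (n * (k div n) + k mod n)" by (simp only: mult_div_mod_eq)
    also have "\<dots> = \<alpha> ^ (k mod n)" by (simp only: power_add power_mult an power_one mult_1)
    finally show ?thesis .
  qed
  define h where "h z = (z * q) mod n" for z
  have hZ: "h ` Z \<subseteq> Z"
  proof
    fix w assume "w \<in> h ` Z"
    then obtain z where z: "z \<in> Z" "w = h z" by auto
    then obtain i k where ik: "i \<in> {1..\<delta>-1}" "z = (i * q^k) mod n"
      unfolding Z_def bch_Z_def cyc_coset_def by auto
    have "w = (i * q^(Suc k)) mod n" unfolding z(2) h_def ik(2)
      by (simp add: mod_mult_left_eq mult.assoc mult.commute[of q])
    thus "w \<in> Z" unfolding Z_def bch_Z_def cyc_coset_def using ik(1) by blast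
  qed
  have hinj: "inj_on h Z"
  proof (intro inj_onI)
    fix z z' assume z: "z \<in> Z" "z' \<in> Z" and hz: "h z = h z'"
    have "(z * q * q^(m-1)) mod n = (z' * q * q^(m-1)) mod n"
      using hz unfolding h_def by (metis mod_mult_left_eq)
    moreover have qq: "q * q^(m-1) = q^(m*1+0)" using m1 by (simp flip: power_Suc)
    ultimately have E: "(z * q^(m*1+0)) mod n = (z' * q^(m*1+0)) mod n"
      by (simp only: mult.assoc qq)
    have "z mod n = (z * q^(m*1+0)) mod n" using qm_mod[OF A(10) q1, of z 1 0] by simp
    also have "\<dots> = (z' * q^(m*1+0)) mod n" by (rule E)
    also have "\<dots> = z' mod n" using qm_mod[OF A(10) q1, of z' 1 0] by simp
    finally have "z mod n = z' mod n" .
    moreover have "z < n" "z' < n" using z Zsub by auto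
    ultimately show "z = z'" by simp
  qed
  have hbij: "bij_betw h Z Z" unfolding bij_betw_def using hinj endo_inj_surj[OF finZ hZ hinj] by simp
  define g where "g = bch_gen q n \<delta> \<alpha>"
  define lf where "lf w = [:- (\<alpha> ^ w), 1:]" for w
  have g_def': "g = (\<Prod>z\<in>Z. lf z)" unfolding g_def bch_gen_def Z_def lf_def ..
  have "map_poly \<phi> g = (\<Prod>z\<in>Z. map_poly \<phi> (lf z))"
    unfolding g_def' by (rule map_poly_prod_hom[OF \<phi>0 \<phi>a \<phi>m \<phi>1])
  also have "\<dots> = (\<Prod>z\<in>Z. lf (h z))"
  proof (rule prod.cong[OF refl])
    fix z
    have "\<phi> (\<alpha> ^ z) = \<alpha> ^ (h z)" unfolding \<phi>_def h_def
      by (simp add: amod[of "z * q"] flip: power_mult)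
    thus "map_poly \<phi> (lf z) = lf (h z)"
      unfolding lf_def by (simp add: map_poly_pCons[where f=\<phi>, OF \<phi>0] \<phi>neg \<phi>1)
  qed
  also have "\<dots> = g" unfolding g_def' by (rule prod.reindex_bij_betw[OF hbij])
  finally have gfix: "map_poly \<phi> g = g" .
  have gcoeff: "coeff g k \<in> range \<iota>" for k
  proof -
    have "\<phi> (coeff g k) = coeff g k" using gfix by (metis coeff_map_poly[where f=\<phi>, OF \<phi>0])
    thus ?thesis using Fr unfolding F_def \<phi>_def by blast
  qed
  define g0 where "g0 = map_poly (inv \<iota>) g"
  have inv0: "inv \<iota> 0 = 0" using A(5) i0 by (metis inv_f_f)
  have gg0: "map_poly \<iota> g0 = g"
  proof (intro poly_eqI)
    fix k
    show "coeff (map_poly \<iota> g0) k = coeff g k"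
      unfolding g0_def using gcoeff[of k]
      by (simp add: coeff_map_poly[where f=\<iota>, OF i0] coeff_map_poly[where f="inv \<iota>", OF inv0] f_inv_into_f)
  qed
  have lf0: "lf z \<noteq> 0" for z unfolding lf_def by simp
  have degg: "degree g = card Z" unfolding g_def'
    by (subst degree_prod_eq_sum_degree) (auto simp: lf0 lf_def)
  have gnz: "g \<noteq> 0" unfolding g_def' using lf0 finZ by simp
  have g0nz: "g0 \<noteq> 0" using gnz gg0 by auto
  have degg0: "degree g0 = card Z" using degg gg0 degree_map_poly[where f=\<iota>, OF inz] by metis
  have BCHeq: "BCH \<iota> q n \<delta> \<alpha> = {c. degree c < n \<and> g0 dvd c}"
    unfolding BCH_def g_def[symmetric] gg0[symmetric]
    using map_poly_dvd_iff[OF A(5) i0 A(6) A(7) g0nz] by simp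
  have dim: "code_dim (BCH \<iota> q n \<delta> \<alpha>) = n - card Z"
    unfolding code_dim_def BCHeq using dim_multiples[OF g0nz] degg0 cardZn by simp
  have qm1: "q^m \<ge> 1" using q1 by simp
  show ?thesis unfolding dim ceil using cardZ cardZn A(10) qm1
    by (simp add: of_nat_diff)
qed
end
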